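(* Every open subset of a UE-space $Y$ is the union of a $\sigma$-boundedly point-finite family of cozero-sets of $Y$.
   Context: "Space" means topological $T_0$-space. A zero-set (cozero-set) of $Y$ is $f^{-1}(0)$ (resp. its complement) for continuous $f:Y\to[0,1]$. A U-representation of $V\subseteq Y$ is a sequence $(U_n(V))_{n\in\mathbb{N}}$ with $V=\bigcup_n U_n(V)$, $U_n(V)\subseteq U_{n+1}(V)$, $U_{2n-1}(V)$ a zero-set, $U_{2n}(V)$ a cozero-set. A family $\alpha$ is an almost subbase of $Y$ if U-representations of its members can be chosen so that $\alpha\cup\{Y\setminus U_{2n-1}(V):V\in\alpha,n\in\mathbb{N}\}$ is a subbase of $Y$. A family is boundedly point-finite if there is an integer $n$ such that any $n+2$ of its members have empty intersection; $\sigma$-boundedly point-finite means a countable union of boundedly point-finite families. A UE-space is a space with a $\sigma$-boundedly point-finite almost subbase. *)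

theory Defs
  imports "HOL-Analysis.Analysis"
begin

definition zero_set :: "'a topology \<Rightarrow> 'a set \<Rightarrow> bool" where
  "zero_set X Z \<longleftrightarrow> (\<exists>f. continuous_map X (top_of_set {0..1::real}) f \<and>
      Z = {x \<in> topspace X. f x = 0})"

definition cozero_set :: "'a topology \<Rightarrow> 'a set \<Rightarrow> bool" where
  "cozero_set X C \<longleftrightarrow> (\<exists>f. continuous_map X (top_of_set {0..1::real}) f \<and>
      C = topspace X - {x \<in> topspace X. f x = 0})"

text \<open>U-representation; indices shifted to start at 0:
  U (2n) corresponds to the paper's U_{2n+1} (zero-set), U (2n+1) to U_{2n+2} (cozero-set).\<close>
definition U_representation :: "'a topology \<Rightarrow> 'a set \<Rightarrow> (nat \<Rightarrow> 'a set) \<Rightarrow> bool" where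
  "U_representation X V U \<longleftrightarrow>
     V = (\<Union>n. U n) \<and> (\<forall>n. U n \<subseteq> U (Suc n)) \<and>
     (\<forall>n. zero_set X (U (2*n))) \<and> (\<forall>n. cozero_set X (U (2*n+1)))"

definition subbase :: "'a topology \<Rightarrow> 'a set set \<Rightarrow> bool" where
  "subbase X S \<longleftrightarrow> (\<forall>s\<in>S. openin X s) \<and>
     (\<forall>W. openin X W \<longrightarrow> (\<forall>x\<in>W. \<exists>F. finite F \<and> F \<subseteq> S \<and>
          x \<in> topspace X \<inter> \<Inter>F \<and> topspace X \<inter> \<Inter>F \<subseteq> W))"

definition almost_subbase :: "'a topology \<Rightarrow> 'a set set \<Rightarrow> bool" where
  "almost_subbase X \<A> \<longleftrightarrow> (\<exists>U. (\<forall>V\<in>\<A>. U_representation X V (U V)) \<and>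
     subbase X (\<A> \<union> {topspace X - U V (2*n) | V n. V \<in> \<A>}))"

definition boundedly_point_finite :: "'a set set \<Rightarrow> bool" where
  "boundedly_point_finite \<A> \<longleftrightarrow>
     (\<exists>n::nat. \<forall>\<F>. \<F> \<subseteq> \<A> \<and> finite \<F> \<and> card \<F> = n + 2 \<longrightarrow> \<Inter>\<F> = {})"

definition sigma_boundedly_point_finite :: "'a set set \<Rightarrow> bool" where
  "sigma_boundedly_point_finite \<A> \<longleftrightarrow>
     (\<exists>\<B> :: nat \<Rightarrow> 'a set set. \<A> = (\<Union>k. \<B> k) \<and> (\<forall>k. boundedly_point_finite (\<B> k)))"

definition UE_space :: "'a topology \<Rightarrow> bool" where
  "UE_space X \<longleftrightarrow> t0_space X \<and>
     (\<exists>\<A>. almost_subbase X \<A> \<and> sigma_boundedly_point_finite \<A>)"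

end

theory Submission
  imports Defs
begin

lemma cont01:
  "continuous_map X (top_of_set {0..1::real}) f \<longleftrightarrow>
   continuous_map X euclideanreal f \<and> (\<forall>x\<in>topspace X. f x \<in> {0..1})"
  by (auto simp: continuous_map_in_subtopology)

lemma zero_set_empty: "zero_set X {}"
  unfolding zero_set_def
  by (rule exI[of _ "\<lambda>x. 1"]) (simp add: cont01)

lemma zero_set_subset: "zero_set X Z \<Longrightarrow> Z \<subseteq> topspace X"
  unfolding zero_set_def by auto

lemma zero_set_topspace: "zero_set X (topspace X)"
  unfolding zero_set_def
  by (rule exI[of _ "\<lambda>x. 0"]) (simp add: cont01)

lemma zero_set_Un:
  assumes "zero_set X A" "zero_set X B" shows "zero_set X (A \<union> B)"
proof -
  obtain f where f: "continuous_map X euclideanreal f" "\<forall>x\<in>topspace X. f x \<in> {0..1}"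
    "A = {x \<in> topspace X. f x = 0}" using assms(1) unfolding zero_set_def cont01 by blast
  obtain g where g: "continuous_map X euclideanreal g" "\<forall>x\<in>topspace X. g x \<in> {0..1}"
    "B = {x \<in> topspace X. g x = 0}" using assms(2) unfolding zero_set_def cont01 by blast
  show ?thesis unfolding zero_set_def cont01
  proof (intro exI conjI)
    show "continuous_map X euclideanreal (\<lambda>x. f x * g x)" using f g by (intro continuous_map_real_mult)
    show "\<forall>x\<in>topspace X. f x * g x \<in> {0..1}" using f(2) g(2) by (auto intro: mult_le_one)
    show "A \<union> B = {x \<in> topspace X. f x * g x = 0}" using f(3) g(3) by auto
  qed
qed

lemma zero_set_Int:
  assumes "zero_set X A" "zero_set X B" shows "zero_set X (A \<inter> B)"
proof -
  obtain f where f: "continuous_map X euclideanreal f" "\<forall>x\<in>topspace X. f x \<in> {0..1}"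
    "A = {x \<in> topspace X. f x = 0}" using assms(1) unfolding zero_set_def cont01 by blast
  obtain g where g: "continuous_map X euclideanreal g" "\<forall>x\<in>topspace X. g x \<in> {0..1}"
    "B = {x \<in> topspace X. g x = 0}" using assms(2) unfolding zero_set_def cont01 by blast
  show ?thesis unfolding zero_set_def cont01
  proof (intro exI conjI)
    show "continuous_map X euclideanreal (\<lambda>x. (f x + g x) / 2)" using f g
      by (intro continuous_intros) auto
    show "\<forall>x\<in>topspace X. (f x + g x) / 2 \<in> {0..1}"
    proof
      fix x assume "x \<in> topspace X"
      then have "f x \<in> {0..1}" "g x \<in> {0..1}" using f(2) g(2) by auto
      then show "(f x + g x) / 2 \<in> {0..1}" by auto
    qed
    show "A \<inter> B = {x \<in> topspace X. (f x + g x) / 2 = 0}" using f g by force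
  qed
qed

lemma zero_set_UN_finite:
  assumes "finite I" "\<forall>i\<in>I. zero_set X (A i)" shows "zero_set X (\<Union>i\<in>I. A i)"
  using assms by (induction I rule: finite_induct) (auto simp: zero_set_empty zero_set_Un)

lemma cozero_diff: "zero_set X Z \<Longrightarrow> cozero_set X (topspace X - Z)"
  unfolding zero_set_def cozero_set_def by auto

lemma cozero_topspace: "cozero_set X (topspace X)"
  unfolding cozero_set_def
  by (rule exI[of _ "\<lambda>x. 1"]) (simp add: cont01)

lemma cozero_Int:
  assumes "cozero_set X A" "cozero_set X B" shows "cozero_set X (A \<inter> B)"
proof -
  obtain f where f: "continuous_map X euclideanreal f" "\<forall>x\<in>topspace X. f x \<in> {0..1}"
    "A = topspace X - {x \<in> topspace X. f x = 0}" using assms(1) unfolding cozero_set_def cont01 by blast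
  obtain g where g: "continuous_map X euclideanreal g" "\<forall>x\<in>topspace X. g x \<in> {0..1}"
    "B = topspace X - {x \<in> topspace X. g x = 0}" using assms(2) unfolding cozero_set_def cont01 by blast
  show ?thesis unfolding cozero_set_def cont01
  proof (intro exI conjI)
    show "continuous_map X euclideanreal (\<lambda>x. f x * g x)" using f g by (intro continuous_map_real_mult)
    show "\<forall>x\<in>topspace X. f x * g x \<in> {0..1}" using f(2) g(2) by (auto intro: mult_le_one)
    show "A \<inter> B = topspace X - {x \<in> topspace X. f x * g x = 0}" using f(3) g(3) by auto
  qed
qed

lemma cozero_INT_finite:
  assumes "finite I" "\<forall>i\<in>I. cozero_set X (A i)"
  shows "cozero_set X (topspace X \<inter> (\<Inter>i\<in>I. A i))"
  using assms
proof (induction I rule: finite_induct)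
  case empty then show ?case by (simp add: cozero_topspace)
next
  case (insert i I)
  have "topspace X \<inter> (\<Inter>j\<in>insert i I. A j) = A i \<inter> (topspace X \<inter> (\<Inter>j\<in>I. A j))" by auto
  then show ?case using insert by (simp add: cozero_Int)
qed

lemma bpf_iff:
  "boundedly_point_finite \<A> \<longleftrightarrow> (\<exists>m. \<forall>y. finite {V\<in>\<A>. y\<in>V} \<and> card {V\<in>\<A>. y\<in>V} \<le> m)"
proof
  assume "boundedly_point_finite \<A>"
  then obtain n where n: "\<forall>F. F \<subseteq> \<A> \<and> finite F \<and> card F = n+2 \<longrightarrow> \<Inter>F = {}"
    unfolding boundedly_point_finite_def by blast
  have "finite {V\<in>\<A>. y\<in>V} \<and> card {V\<in>\<A>. y\<in>V} \<le> n+1" for y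
  proof -
    let ?S = "{V\<in>\<A>. y\<in>V}"
    have no: False if "T \<subseteq> ?S" "finite T" "card T = n+2" for T
    proof -
      have "y \<in> \<Inter>T" using that(1) by auto
      with n that show False by blast
    qed
    have fin: "finite ?S"
    proof (rule ccontr)
      assume "\<not> finite ?S"
      from infinite_arbitrarily_large[OF this, of "n+2"] no show False by blast
    qed
    moreover have "card ?S \<le> n+1"
    proof (rule ccontr)
      assume "\<not> card ?S \<le> n+1"
      then have "n+2 \<le> card ?S" by simp
      then obtain T where "T \<subseteq> ?S" "card T = n+2" "finite T" by (rule obtain_subset_with_card_n)
      with no show False by blast
    qed
    ultimately show ?thesis by blast
  qed
  then show "\<exists>m. \<forall>y. finite {V\<in>\<A>. y\<in>V} \<and> card {V\<in>\<A>. y\<in>V} \<le> m" by blast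
next
  assume "\<exists>m. \<forall>y. finite {V\<in>\<A>. y\<in>V} \<and> card {V\<in>\<A>. y\<in>V} \<le> m"
  then obtain m where m: "\<forall>y. finite {V\<in>\<A>. y\<in>V} \<and> card {V\<in>\<A>. y\<in>V} \<le> m" by blast
  show "boundedly_point_finite \<A>" unfolding boundedly_point_finite_def
  proof (intro exI[of _ m] allI impI)
    fix F assume F: "F \<subseteq> \<A> \<and> finite F \<and> card F = m + 2"
    show "\<Inter>F = {}"
    proof (rule ccontr)
      assume "\<Inter>F \<noteq> {}"
      then obtain y where y: "y \<in> \<Inter>F" by blast
      have "F \<subseteq> {V\<in>\<A>. y\<in>V}" using F y by auto
      then have "card F \<le> card {V\<in>\<A>. y\<in>V}" using m by (intro card_mono) auto
      moreover have "card {V\<in>\<A>. y\<in>V} \<le> m" using m by blast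
      ultimately show False using F by linarith
    qed
  qed
qed

lemma K_zero:
  assumes "zero_set X A" "\<forall>t\<in>J. finite t \<and> (\<forall>e\<in>t. zero_set X (Z e))"
    "\<forall>y\<in>A. finite {e\<in>\<Union>J. y \<in> Z e} \<and> card {e\<in>\<Union>J. y \<in> Z e} \<le> s"
  shows "zero_set X (A \<inter> {y. \<forall>t\<in>J. \<exists>e\<in>t. y \<in> Z e})"
  using assms
proof (induction s arbitrary: A J)
  case 0
  show ?case
  proof (cases "J = {}")
    case True then show ?thesis using 0 by simp
  next
    case False
    have "A \<inter> {y. \<forall>t\<in>J. \<exists>e\<in>t. y \<in> Z e} = {}"
    proof (rule ccontr)
      assume "A \<inter> {y. \<forall>t\<in>J. \<exists>e\<in>t. y \<in> Z e} \<noteq> {}"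
      then obtain y where y: "y\<in>A" "\<forall>t\<in>J. \<exists>e\<in>t. y\<in>Z e" by blast
      obtain t0 where t0: "t0\<in>J" using False by blast
      then obtain e where e: "e\<in>t0" "y\<in>Z e" using y by blast
      hence "e \<in> {e\<in>\<Union>J. y\<in>Z e}" using t0 by blast
      moreover have "finite {e\<in>\<Union>J. y\<in>Z e}" "card {e\<in>\<Union>J. y\<in>Z e} = 0" using 0 y(1) by auto
      ultimately show False by (metis card_0_eq empty_iff)
    qed
    thus ?thesis by (simp add: zero_set_empty)
  qed
next
  case (Suc s)
  show ?case
  proof (cases "J = {}")
    case True then show ?thesis using Suc by simp
  next
    case False
    obtain t0 where t0: "t0 \<in> J" using False by blast
    define Je where "Je e = {t\<in>J. e \<notin> t}" for e
    have eq: "A \<inter> {y. \<forall>t\<in>J. \<exists>e\<in>t. y \<in> Z e}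
       = (\<Union>e\<in>t0. (A \<inter> Z e) \<inter> {y. \<forall>t\<in>Je e. \<exists>e'\<in>t. y \<in> Z e'})"
    proof
      show "A \<inter> {y. \<forall>t\<in>J. \<exists>e\<in>t. y \<in> Z e} \<subseteq> (\<Union>e\<in>t0. (A \<inter> Z e) \<inter> {y. \<forall>t\<in>Je e. \<exists>e'\<in>t. y \<in> Z e'})"
      proof
        fix y assume y: "y \<in> A \<inter> {y. \<forall>t\<in>J. \<exists>e\<in>t. y \<in> Z e}"
        then obtain e where e: "e\<in>t0" "y\<in>Z e" using t0 by blast
        have "\<forall>t\<in>Je e. \<exists>e'\<in>t. y\<in>Z e'" using y by (simp add: Je_def)
        then show "y \<in> (\<Union>e\<in>t0. (A \<inter> Z e) \<inter> {y. \<forall>t\<in>Je e. \<exists>e'\<in>t. y \<in> Z e'})"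
          using e y by blast
      qed
      show "(\<Union>e\<in>t0. (A \<inter> Z e) \<inter> {y. \<forall>t\<in>Je e. \<exists>e'\<in>t. y \<in> Z e'}) \<subseteq> A \<inter> {y. \<forall>t\<in>J. \<exists>e\<in>t. y \<in> Z e}"
      proof
        fix y assume "y \<in> (\<Union>e\<in>t0. (A \<inter> Z e) \<inter> {y. \<forall>t\<in>Je e. \<exists>e'\<in>t. y \<in> Z e'})"
        then obtain e where e: "e\<in>t0" "y\<in>A" "y\<in>Z e" "\<forall>t\<in>Je e. \<exists>e'\<in>t. y\<in>Z e'" by blast
        have "\<exists>e'\<in>t. y \<in> Z e'" if "t \<in> J" for t
        proof (cases "e \<in> t")
          case True then show ?thesis using e by blast
        next
          case False then have "t \<in> Je e" using that by (simp add: Je_def)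
          then show ?thesis using e by blast
        qed
        then show "y \<in> A \<inter> {y. \<forall>t\<in>J. \<exists>e\<in>t. y \<in> Z e}" using e by blast
      qed
    qed
    have "zero_set X ((A \<inter> Z e) \<inter> {y. \<forall>t\<in>Je e. \<exists>e'\<in>t. y \<in> Z e'})" if e: "e \<in> t0" for e
    proof (rule Suc.IH)
      show "zero_set X (A \<inter> Z e)" using zero_set_Int Suc.prems t0 e by blast
      show "\<forall>t\<in>Je e. finite t \<and> (\<forall>e\<in>t. zero_set X (Z e))" using Suc.prems(2) Je_def by auto
      show "\<forall>y\<in>A \<inter> Z e. finite {e'\<in>\<Union>(Je e). y \<in> Z e'} \<and> card {e'\<in>\<Union>(Je e). y \<in> Z e'} \<le> s"
      proof
        fix y assume y: "y \<in> A \<inter> Z e"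
        have sub: "{e'\<in>\<Union>(Je e). y\<in>Z e'} \<subseteq> {e'\<in>\<Union>J. y\<in>Z e'} - {e}" by (auto simp: Je_def)
        have fin: "finite {e'\<in>\<Union>J. y\<in>Z e'}" and c: "card {e'\<in>\<Union>J. y\<in>Z e'} \<le> Suc s"
          using Suc.prems(3) y by auto
        have "e \<in> {e'\<in>\<Union>J. y\<in>Z e'}" using t0 e y by auto
        then have "card ({e'\<in>\<Union>J. y\<in>Z e'} - {e}) \<le> s" using fin c by (simp add: card_Diff_singleton)
        then show "finite {e'\<in>\<Union>(Je e). y \<in> Z e'} \<and> card {e'\<in>\<Union>(Je e). y \<in> Z e'} \<le> s"
          using sub fin by (meson card_mono finite_Diff finite_subset le_trans)
      qed
    qed
    moreover have "finite t0" using Suc.prems(2) t0 by blast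
    ultimately show ?thesis unfolding eq by (intro zero_set_UN_finite) auto
  qed
qed

theorem proposition5p10:
  fixes Y :: "'a topology" and W :: "'a set"
  assumes "UE_space Y" and "openin Y W"
  shows "\<exists>\<B>. sigma_boundedly_point_finite \<B> \<and> (\<forall>B\<in>\<B>. cozero_set Y B) \<and> \<Union>\<B> = W"
proof -
  obtain \<A> where A: "almost_subbase Y \<A>" "sigma_boundedly_point_finite \<A>"
    using assms(1) unfolding UE_space_def by blast
  obtain U where Urep: "\<forall>V\<in>\<A>. U_representation Y V (U V)"
    and sb: "subbase Y (\<A> \<union> {topspace Y - U V (2*n) | V n. V \<in> \<A>})"
    using A(1) unfolding almost_subbase_def by blast
  obtain Bk :: "nat \<Rightarrow> 'a set set" where Bk: "\<A> = (\<Union>k. Bk k)" "\<forall>k. boundedly_point_finite (Bk k)"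
    using A(2) unfolding sigma_boundedly_point_finite_def by blast
  have U_mono: "U V i \<subseteq> U V j" if "V \<in> \<A>" "i \<le> j" for V i j
  proof -
    have "\<forall>n. U V n \<subseteq> U V (Suc n)" using Urep that(1) unfolding U_representation_def by blast
    then show ?thesis using lift_Suc_mono_le[of "U V"] that(2) by blast
  qed
  have U_sub: "U V i \<subseteq> V" if "V \<in> \<A>" for V i
    using Urep that unfolding U_representation_def by blast
  have U_zero: "zero_set Y (U V (2*n))" if "V \<in> \<A>" for V n
    using Urep that unfolding U_representation_def by blast
  have U_cozero: "cozero_set Y (U V (2*n+1))" if "V \<in> \<A>" for V n
    using Urep that unfolding U_representation_def by blast
  have memU: "\<exists>m. x \<in> U V (2*m+1)" if VA: "V \<in> \<A>" and xV: "x \<in> V" for V x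
  proof -
    have "U_representation Y V (U V)" using Urep VA by blast
    then have "V = (\<Union>n. U V n)" unfolding U_representation_def by (rule conjunct1)
    then obtain i where "x \<in> U V i" using xV by (metis UN_E)
    moreover have "U V i \<subseteq> U V (2*i+1)" using U_mono[OF VA] by simp
    ultimately show ?thesis by blast
  qed
  have "\<forall>k. \<exists>m. \<forall>y. finite {V\<in>Bk k. y\<in>V} \<and> card {V\<in>Bk k. y\<in>V} \<le> m"
    using Bk(2) by (simp add: bpf_iff)
  from choice[OF this] obtain mb where mb0: "\<forall>k y. finite {V\<in>Bk k. y\<in>V} \<and> card {V\<in>Bk k. y\<in>V} \<le> mb k"
    by blast
  have mb: "finite {V\<in>Bk k. y\<in>V} \<and> card {V\<in>Bk k. y\<in>V} \<le> mb k" for k y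
    using mb0 by blast
  define C where "C L = (\<Union>k\<le>L. Bk k)" for L
  define MB where "MB L = (\<Sum>k\<le>L. mb k)" for L
  have C_sub: "C L \<subseteq> \<A>" for L using Bk(1) unfolding C_def by blast
  have C_cnt: "finite {V\<in>C L. y\<in>V} \<and> card {V\<in>C L. y\<in>V} \<le> MB L" for L y
  proof -
    have eq: "{V\<in>C L. y\<in>V} = (\<Union>k\<le>L. {V\<in>Bk k. y\<in>V})" unfolding C_def by blast
    have "card (\<Union>k\<le>L. {V\<in>Bk k. y\<in>V}) \<le> (\<Sum>k\<le>L. card {V\<in>Bk k. y\<in>V})"
      by (rule card_UN_le) simp
    also have "\<dots> \<le> MB L" unfolding MB_def using mb by (intro sum_mono) blast
    finally show ?thesis unfolding eq using mb by auto
  qed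
  have cardS: "card ({V\<in>C L. y\<in>V} \<times> {..L}) \<le> MB L * (L+1)" for L y
  proof -
    have "card ({V\<in>C L. y\<in>V} \<times> {..L}) = card {V\<in>C L. y\<in>V} * card {..L}"
      by (rule card_cartesian_product)
    also have "\<dots> = card {V\<in>C L. y\<in>V} * (L+1)" by simp
    also have "\<dots> \<le> MB L * (L+1)" using C_cnt[of L y] by (intro mult_le_mono1) blast
    finally show ?thesis .
  qed
  define P where "P p = topspace Y \<inter> (\<Inter>e\<in>p. U (fst e) (2 * snd e + 1))" for p :: "('a set \<times> nat) set"
  define Z where "Z e = U (fst e) (2 * snd e)" for e :: "'a set \<times> nat"
  define J where "J L p = {t. finite t \<and> t \<subseteq> C L \<times> {..L} \<and> P p \<inter> (topspace Y - \<Union>(Z ` t)) \<subseteq> W}" for L p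
  have Jmem: "t \<in> J L p \<longleftrightarrow> finite t \<and> t \<subseteq> C L \<times> {..L} \<and> P p \<inter> (topspace Y - \<Union>(Z ` t)) \<subseteq> W" for t L p
    unfolding J_def by (rule mem_Collect_eq)
  have Jfin: "finite t" if "t \<in> J L p" for t L p using that Jmem by (simp only:)
  have JW: "P p \<inter> (topspace Y - \<Union>(Z ` t)) \<subseteq> W" if "t \<in> J L p" for t L p using that Jmem by (simp only:)
  have JA: "fst e \<in> \<A>" "fst e \<in> C L" "snd e \<le> L" if "t \<in> J L p" "e \<in> t" for t e L p
  proof -
    have "t \<subseteq> C L \<times> {..L}" using that(1) Jmem by (simp only:)
    then have "e \<in> C L \<times> {..L}" using that(2) by (rule subsetD)
    then show "fst e \<in> C L" "snd e \<le> L" by (auto simp: mem_Times_iff)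
    then show "fst e \<in> \<A>" using C_sub[of L] by blast
  qed
  define K where "K L p = {y. \<forall>t\<in>J L p. \<exists>e\<in>t. y \<in> Z e}" for L p
  define Ob where "Ob L p = P p \<inter> (topspace Y - K L p)" for L p
  define F where "F L = {Ob L p | p. finite p \<and> p \<subseteq> C L \<times> {..L}}" for L
  have P_mem: "y \<in> P p \<Longrightarrow> p \<subseteq> C L \<times> {..L} \<Longrightarrow> p \<subseteq> {V\<in>C L. y\<in>V} \<times> {..L}" for y p L
  proof
    fix e assume "y \<in> P p" "p \<subseteq> C L \<times> {..L}" "e \<in> p"
    then have "y \<in> U (fst e) (2 * snd e + 1)" "fst e \<in> C L" "snd e \<le> L"
      unfolding P_def by auto
    moreover have "fst e \<in> \<A>" using C_sub calculation(2) by blast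
    ultimately show "e \<in> {V\<in>C L. y\<in>V} \<times> {..L}" using U_sub by (cases e) auto
  qed
  have O_W: "Ob L p \<subseteq> W" for L p
  proof
    fix y assume y: "y \<in> Ob L p"
    then obtain t where t: "t \<in> J L p" "\<forall>e\<in>t. y \<notin> Z e" unfolding Ob_def K_def by auto
    then have "y \<in> P p \<inter> (topspace Y - \<Union>(Z ` t))" using y unfolding Ob_def by auto
    with JW[OF t(1)] show "y \<in> W" by (rule subsetD)
  qed
  have O_coz: "cozero_set Y (Ob L p)" if p: "finite p" "p \<subseteq> C L \<times> {..L}" for L p
  proof -
    have c1: "cozero_set Y (P p)" unfolding P_def
    proof (rule cozero_INT_finite[OF p(1), where A = "\<lambda>e. U (fst e) (2 * snd e + 1)"])
      show "\<forall>e\<in>p. cozero_set Y (U (fst e) (2 * snd e + 1))"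
      proof
        fix e assume "e \<in> p"
        then have "e \<in> C L \<times> {..L}" using p(2) by blast
        then have "fst e \<in> C L" by (auto simp: mem_Times_iff)
        then have "fst e \<in> \<A>" using C_sub[of L] by blast
        then show "cozero_set Y (U (fst e) (2 * snd e + 1))" by (rule U_cozero)
      qed
    qed
    have "zero_set Y (topspace Y \<inter> K L p)" unfolding K_def
    proof (rule K_zero[where s = "MB L * (L+1)"])
      show "zero_set Y (topspace Y)" by (rule zero_set_topspace)
      show "\<forall>t\<in>J L p. finite t \<and> (\<forall>e\<in>t. zero_set Y (Z e))"
      proof (intro ballI conjI)
        fix t assume t: "t \<in> J L p"
        show "finite t" using t by (rule Jfin)
      next
        fix t e assume t: "t \<in> J L p" and e: "e \<in> t"
        have "fst e \<in> \<A>" using t e by (rule JA)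
        then show "zero_set Y (Z e)" unfolding Z_def by (rule U_zero)
      qed
      show "\<forall>y\<in>topspace Y. finite {e\<in>\<Union>(J L p). y \<in> Z e} \<and> card {e\<in>\<Union>(J L p). y \<in> Z e} \<le> MB L * (L+1)"
      proof
        fix y assume "y \<in> topspace Y"
        have sub: "{e\<in>\<Union>(J L p). y \<in> Z e} \<subseteq> {V\<in>C L. y\<in>V} \<times> {..L}"
        proof
          fix e assume e: "e \<in> {e\<in>\<Union>(J L p). y \<in> Z e}"
          then obtain t where t: "t \<in> J L p" "e \<in> t" "y \<in> Z e" by blast
          have "fst e \<in> C L" "snd e \<le> L" using JA[OF t(1,2)] by auto
          moreover have "y \<in> fst e" using t(3) U_sub[OF JA(1)[OF t(1,2)]] unfolding Z_def by blast
          ultimately show "e \<in> {V\<in>C L. y\<in>V} \<times> {..L}" by (cases e) auto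
        qed
        have fin: "finite ({V\<in>C L. y\<in>V} \<times> {..L})" using C_cnt by auto
        have "card ({V\<in>C L. y\<in>V} \<times> {..L}) \<le> MB L * (L+1)" by (rule cardS)
        then show "finite {e\<in>\<Union>(J L p). y \<in> Z e} \<and> card {e\<in>\<Union>(J L p). y \<in> Z e} \<le> MB L * (L+1)"
          using sub fin by (meson card_mono finite_subset le_trans)
      qed
    qed
    then have c2': "cozero_set Y (topspace Y - (topspace Y \<inter> K L p))" by (rule cozero_diff)
    have "topspace Y - (topspace Y \<inter> K L p) = topspace Y - K L p" by blast
    with c2' have c2: "cozero_set Y (topspace Y - K L p)" by simp
    show ?thesis unfolding Ob_def using c1 c2 by (rule cozero_Int)
  qed
  have F_bpf: "boundedly_point_finite (F L)" for L
    unfolding bpf_iff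
  proof (intro exI allI)
    fix y
    let ?S = "{V\<in>C L. y\<in>V} \<times> {..L}"
    have sub: "{B\<in>F L. y\<in>B} \<subseteq> Ob L ` Pow ?S"
    proof
      fix B assume "B \<in> {B\<in>F L. y\<in>B}"
      then obtain p where p: "B = Ob L p" "p \<subseteq> C L \<times> {..L}" "y \<in> Ob L p" unfolding F_def by auto
      then have "p \<subseteq> ?S" using P_mem unfolding Ob_def by blast
      then show "B \<in> Ob L ` Pow ?S" using p by blast
    qed
    have fin: "finite ?S" using C_cnt by auto
    have "card {B\<in>F L. y\<in>B} \<le> card (Ob L ` Pow ?S)" using sub fin by (intro card_mono) auto
    also have "\<dots> \<le> card (Pow ?S)" by (rule card_image_le) (use fin in auto)
    also have "\<dots> = 2 ^ card ?S" using fin by (simp add: card_Pow)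
    also have "\<dots> \<le> 2 ^ (MB L * (L+1))"
      using cardS[of L y] by (intro power_increasing) auto
    finally show "finite {B\<in>F L. y\<in>B} \<and> card {B\<in>F L. y\<in>B} \<le> 2 ^ (MB L * (L+1))"
      using sub fin by (meson finite_Pow_iff finite_imageI finite_subset)
  qed
  have cover: "x \<in> \<Union>(\<Union>L. F L)" if x: "x \<in> W" for x
  proof -
    have "\<forall>W. openin Y W \<longrightarrow> (\<forall>x\<in>W. \<exists>F. finite F \<and> F \<subseteq> \<A> \<union> {topspace Y - U V (2*n) | V n. V \<in> \<A>} \<and>
          x \<in> topspace Y \<inter> \<Inter>F \<and> topspace Y \<inter> \<Inter>F \<subseteq> W)"
      using sb unfolding subbase_def by (rule conjunct2)
    then have "\<exists>F. finite F \<and> F \<subseteq> \<A> \<union> {topspace Y - U V (2*n) | V n. V \<in> \<A>} \<and>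
          x \<in> topspace Y \<inter> \<Inter>F \<and> topspace Y \<inter> \<Inter>F \<subseteq> W"
      using assms(2) x by blast
    then obtain G where G: "finite G" "G \<subseteq> \<A> \<union> {topspace Y - U V (2*n) | V n. V \<in> \<A>}"
      "x \<in> topspace Y \<inter> \<Inter>G" "topspace Y \<inter> \<Inter>G \<subseteq> W"
      by (elim exE conjE)
    have "\<forall>s\<in>G\<inter>\<A>. \<exists>km. s \<in> Bk (fst km) \<and> x \<in> U s (2 * snd km+1)"
    proof
      fix s assume s: "s \<in> G \<inter> \<A>"
      then obtain k where k: "s \<in> Bk k" using Bk(1) by blast
      have "x \<in> s" using G(3) s by blast
      then obtain m where "x \<in> U s (2*m+1)" using memU s by blast
      then show "\<exists>km. s \<in> Bk (fst km) \<and> x \<in> U s (2 * snd km+1)" using k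
        by (intro exI[of _ "(k,m)"]) simp
    qed
    from bchoice[OF this] obtain km where km: "\<forall>s\<in>G\<inter>\<A>. s \<in> Bk (fst (km s)) \<and> x \<in> U s (2 * snd (km s)+1)"
      by blast
    define ks where "ks s = fst (km s)" for s
    define ms where "ms s = snd (km s)" for s
    have pos: "\<forall>s\<in>G\<inter>\<A>. s \<in> Bk (ks s) \<and> x \<in> U s (2*ms s+1)"
      using km unfolding ks_def ms_def by blast
    have "\<forall>s\<in>G-\<A>. \<exists>vnk. vnk \<in> {(V,n,k). V \<in> Bk k \<and> s = topspace Y - U V (2*n)}"
    proof
      fix s assume s: "s \<in> G - \<A>"
      then obtain V n where Vn: "V \<in> \<A>" "s = topspace Y - U V (2*n)" using G(2) by blast
      then obtain k where "V \<in> Bk k" using Bk(1) by blast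
      then show "\<exists>vnk. vnk \<in> {(V,n,k). V \<in> Bk k \<and> s = topspace Y - U V (2*n)}"
        using Vn by (intro exI[of _ "(V,n,k)"]) simp
    qed
    from bchoice[OF this] obtain vnk where vnk: "\<forall>s\<in>G-\<A>. vnk s \<in> {(V,n,k). V \<in> Bk k \<and> s = topspace Y - U V (2*n)}"
      by blast
    define vs where "vs s = fst (vnk s)" for s
    define ns where "ns s = fst (snd (vnk s))" for s
    define kv where "kv s = snd (snd (vnk s))" for s
    have neg: "\<forall>s\<in>G-\<A>. vs s \<in> Bk (kv s) \<and> s = topspace Y - U (vs s) (2*ns s)"
    proof
      fix s assume "s \<in> G - \<A>"
      then have "vnk s \<in> {(V,n,k). V \<in> Bk k \<and> s = topspace Y - U V (2*n)}" using vnk by (rule bspec[rotated])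
      then show "vs s \<in> Bk (kv s) \<and> s = topspace Y - U (vs s) (2*ns s)"
        unfolding vs_def ns_def kv_def by (cases "vnk s") auto
    qed
    define L where "L = (\<Sum>s\<in>G. ks s + ms s + kv s + ns s)"
    have leL: "ks s \<le> L" "ms s \<le> L" "kv s \<le> L" "ns s \<le> L" if "s \<in> G" for s
    proof -
      have "ks s + ms s + kv s + ns s \<le> L" unfolding L_def using that G(1)
        by (intro member_le_sum) auto
      then show "ks s \<le> L" "ms s \<le> L" "kv s \<le> L" "ns s \<le> L" by auto
    qed
    define p where "p = (\<lambda>s. (s, ms s)) ` (G \<inter> \<A>)"
    define t where "t = (\<lambda>s. (vs s, ns s)) ` (G - \<A>)"
    have inC: "V \<in> C L" if "V \<in> Bk k" "k \<le> L" for V k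
      unfolding C_def using that by blast
    have pC: "p \<subseteq> C L \<times> {..L}"
    proof
      fix e assume "e \<in> p"
      then obtain s where s: "s \<in> G \<inter> \<A>" "e = (s, ms s)" unfolding p_def by blast
      have "s \<in> Bk (ks s)" using pos s(1) by blast
      moreover have "ks s \<le> L" "ms s \<le> L" using leL s(1) by auto
      ultimately show "e \<in> C L \<times> {..L}" using inC s(2) by simp
    qed
    have tC: "t \<subseteq> C L \<times> {..L}"
    proof
      fix e assume "e \<in> t"
      then obtain s where s: "s \<in> G - \<A>" "e = (vs s, ns s)" unfolding t_def by blast
      have "vs s \<in> Bk (kv s)" using neg s(1) by blast
      moreover have "kv s \<le> L" "ns s \<le> L" using leL s(1) by auto
      ultimately show "e \<in> C L \<times> {..L}" using inC s(2) by simp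
    qed
    have finp: "finite p" "finite t" unfolding p_def t_def using G(1) by auto
    have xP: "x \<in> P p" unfolding P_def p_def using pos G(3) by auto
    have "P p \<inter> (topspace Y - \<Union>(Z ` t)) \<subseteq> topspace Y \<inter> \<Inter>G"
    proof
      fix z assume z: "z \<in> P p \<inter> (topspace Y - \<Union>(Z ` t))"
      have "z \<in> s" if s: "s \<in> G" for s
      proof (cases "s \<in> \<A>")
        case True
        then have "z \<in> U s (2 * ms s + 1)" using z s unfolding P_def p_def by auto
        then show ?thesis using U_sub True by blast
      next
        case False
        then have "z \<notin> U (vs s) (2 * ns s)" using z s unfolding t_def Z_def by auto
        then show ?thesis using neg s False z unfolding P_def by auto
      qed
      then show "z \<in> topspace Y \<inter> \<Inter>G" using z unfolding P_def by auto
    qed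
    then have tJ: "t \<in> J L p" unfolding Jmem using finp tC G(4) by blast
    have "\<forall>e\<in>t. x \<notin> Z e"
    proof
      fix e assume "e \<in> t"
      then obtain s where s: "s \<in> G" "s \<notin> \<A>" "e = (vs s, ns s)" unfolding t_def by auto
      then show "x \<notin> Z e" using neg G(3) unfolding Z_def by auto
    qed
    then have "x \<in> Ob L p" using tJ xP unfolding Ob_def K_def P_def by auto
    moreover have "Ob L p \<in> F L" unfolding F_def using finp pC by blast
    ultimately show ?thesis by blast
  qed
  show ?thesis
  proof (intro exI conjI)
    show "sigma_boundedly_point_finite (\<Union>L. F L)"
      unfolding sigma_boundedly_point_finite_def using F_bpf by blast
    show "\<forall>B\<in>(\<Union>L. F L). cozero_set Y B"
    proof
      fix B assume "B \<in> (\<Union>L. F L)"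
      then obtain L p where "B = Ob L p" "finite p" "p \<subseteq> C L \<times> {..L}" unfolding F_def by blast
      then show "cozero_set Y B" using O_coz by simp
    qed
    have "\<Union>(\<Union>L. F L) \<subseteq> W"
    proof
      fix y assume "y \<in> \<Union>(\<Union>L. F L)"
      then obtain L p where "y \<in> Ob L p" unfolding F_def by blast
      then show "y \<in> W" using O_W by blast
    qed
    then show "\<Union>(\<Union>L. F L) = W" using cover by blast
  qed
qed

end
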